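(* Let $\mathbf{X}$ be a finite induced subtournament of $\mathbf{S}(2)$. Then $\mathbf{X}$ has exactly $2|\mathbf{X}|/|\mathrm{Aut}(\mathbf{X})|$ pairwise nonisomorphic extensions in $\mathcal{P}_2$.
   Context: $\mathbf{S}(2)$ is the tournament whose vertices are the points of the unit circle of $\mathbb{C}$ with rational argument, with an arc from $x$ to $y$ iff $0<\arg(y/x)<\pi$. $\mathcal{P}_2$ is the class of finite structures $\mathbf{A}=(A,<^{\mathbf{A}},P_1^{\mathbf{A}},P_2^{\mathbf{A}})$ with $<^{\mathbf{A}}$ a linear order and $(P_1^{\mathbf{A}},P_2^{\mathbf{A}})$ a partition of $A$; isomorphisms are order-preserving bijections preserving $P_1$ and $P_2$. Writing $a\sim b$ when $a,b$ lie in the same part, $p(\mathbf{A})$ is the tournament on $A$ with an arc from $a$ to $b$ iff either ($a\sim b$ and $a<^{\mathbf{A}}b$) or ($a\not\sim b$ and $b<^{\mathbf{A}}a$). An extension of a tournament $\mathbf{X}$ is any $\mathbf{A}$ with $p(\mathbf{A})=\mathbf{X}$. $\mathrm{Aut}(\mathbf{X})$ is the automorphism group of $\mathbf{X}$. *)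

theory Defs
  imports "HOL-Analysis.Analysis"
begin

definition S2_vertices :: "complex set" where
  "S2_vertices = {z. \<exists>q::rat. z = cis (of_rat q)}"

definition S2_arc :: "complex \<Rightarrow> complex \<Rightarrow> bool" where
  "S2_arc x y \<longleftrightarrow> 0 < Arg (y / x) \<and> Arg (y / x) < pi"

text \<open>A structure in P_2 on carrier A is represented by a pair (L, P1):
  L \<subseteq> A \<times> A a strict linear order on A, P1 \<subseteq> A, and P2 = A - P1.\<close>
definition P2_struct :: "'a set \<Rightarrow> ('a \<times> 'a) set \<times> 'a set \<Rightarrow> bool" where
  "P2_struct A S \<longleftrightarrow> fst S \<subseteq> A \<times> A \<and> strict_linear_order_on A (fst S) \<and> snd S \<subseteq> A"

definition p_arc :: "('a \<times> 'a) set \<times> 'a set \<Rightarrow> 'a \<Rightarrow> 'a \<Rightarrow> bool" where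
  "p_arc S a b \<longleftrightarrow>
     (((a \<in> snd S) = (b \<in> snd S)) \<and> (a, b) \<in> fst S) \<or>
     (((a \<in> snd S) \<noteq> (b \<in> snd S)) \<and> (b, a) \<in> fst S)"

definition extensions :: "'a set \<Rightarrow> ('a \<Rightarrow> 'a \<Rightarrow> bool) \<Rightarrow> (('a \<times> 'a) set \<times> 'a set) set" where
  "extensions X E = {S. P2_struct X S \<and> (\<forall>a\<in>X. \<forall>b\<in>X. p_arc S a b \<longleftrightarrow> E a b)}"

definition P2_iso :: "'a set \<Rightarrow> ('a \<times> 'a) set \<times> 'a set \<Rightarrow> 'a set \<Rightarrow> ('a \<times> 'a) set \<times> 'a set \<Rightarrow> bool" where
  "P2_iso A S B T \<longleftrightarrow> (\<exists>f. bij_betw f A B \<and>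
      (\<forall>a\<in>A. \<forall>b\<in>A. (a, b) \<in> fst S \<longleftrightarrow> (f a, f b) \<in> fst T) \<and>
      (\<forall>a\<in>A. a \<in> snd S \<longleftrightarrow> f a \<in> snd T))"

definition tour_aut :: "'a set \<Rightarrow> ('a \<Rightarrow> 'a \<Rightarrow> bool) \<Rightarrow> ('a \<Rightarrow> 'a) set" where
  "tour_aut X E = {f \<in> X \<rightarrow>\<^sub>E X. bij_betw f X X \<and> (\<forall>a\<in>X. \<forall>b\<in>X. E a b \<longleftrightarrow> E (f a) (f b))}"

end

theory Submission
  imports Defs "HOL-Computational_Algebra.Polynomial"
begin

definition intpoly :: "real poly \<Rightarrow> bool" where
  "intpoly q \<longleftrightarrow> (\<forall>i. coeff q i \<in> \<int>)"

lemma intpoly_mult: "intpoly p \<Longrightarrow> intpoly q \<Longrightarrow> intpoly (p * q)"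
  unfolding intpoly_def coeff_mult by (auto intro!: Ints_sum Ints_mult)

lemma intpoly_power: "intpoly p \<Longrightarrow> intpoly (p ^ n)"
proof (induction n)
  case 0 then show ?case by (auto simp: intpoly_def coeff_1 )
next
  case (Suc n) then show ?case by (simp add: intpoly_mult)
qed

lemma intpoly_lin: "intpoly [:of_int a, - of_int b:]"
  unfolding intpoly_def by (auto simp: coeff_pCons split: nat.splits)

lemma higher_pderiv_pcompose_refl:
  "(pderiv ^^ k) (pcompose p [:c, -1:]) = smult ((-1) ^ k) (pcompose ((pderiv ^^ k) p) [:c, -1::real:])"
proof (induction k)
  case 0 then show ?case by simp
next
  case (Suc k)
  have "(pderiv ^^ Suc k) (pcompose p [:c, -1:]) = pderiv ((pderiv ^^ k) (pcompose p [:c, -1:]))"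
    by simp
  also have "\<dots> = smult ((-1) ^ Suc k) (pcompose ((pderiv ^^ Suc k) p) [:c, -1::real:])"
    unfolding Suc pderiv_smult pderiv_pcompose by (simp add: pderiv_pCons)
  finally show ?case .
qed

lemma higher_pderiv_smult: "(pderiv ^^ k) (smult c p) = smult c ((pderiv ^^ k) p)"
  by (induction k) (simp_all add: pderiv_smult)

lemma higher_pderiv_degree: "degree ((pderiv ^^ k) (p::real poly)) = degree p - k"
  by (induction k) (simp_all add: degree_pderiv)

lemma higher_pderiv_zero: "degree (p::real poly) < k \<Longrightarrow> (pderiv ^^ k) p = 0"
proof -
  assume a: "degree p < k"
  then obtain j where k: "k = Suc j" by (cases k) auto
  have "degree ((pderiv ^^ j) p) = 0" using a k by (simp add: higher_pderiv_degree)
  then have "pderiv ((pderiv ^^ j) p) = 0" by (simp add: pderiv_eq_0_iff)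
  then show ?thesis using k by simp
qed

lemma F_identity:
  fixes f :: "real poly"
  shows "pderiv (pderiv (\<Sum>j<Suc N. smult ((-1)^j) ((pderiv ^^ (2*j)) f)))
          + (\<Sum>j<Suc N. smult ((-1)^j) ((pderiv ^^ (2*j)) f))
         = f + smult ((-1)^N) ((pderiv ^^ (2*N+2)) f)"
proof (induction N)
  case 0 then show ?case by (simp add: numeral_2_eq_2 add.commute)
next
  case (Suc N)
  define S where "S = (\<Sum>j<Suc N. smult ((-1)^j) ((pderiv ^^ (2*j)) f))"
  define A where "A = (pderiv ^^ (2*N+2)) f"
  define B where "B = (pderiv ^^ (2*N+4)) f"
  have e: "pderiv (pderiv A) = B" unfolding A_def B_def
    by (simp add: numeral_2_eq_2 numeral_Bit0)
  have s: "(\<Sum>j<Suc (Suc N). smult ((-1)^j) ((pderiv ^^ (2*j)) f)) = S + smult ((-1)^(Suc N)) A"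
    unfolding S_def A_def by simp
  have ih: "pderiv (pderiv S) + S = f + smult ((-1)^N) A" using Suc unfolding S_def A_def .
  have "pderiv (pderiv (S + smult ((-1)^(Suc N)) A)) + (S + smult ((-1)^(Suc N)) A)
      = (pderiv (pderiv S) + S) + smult ((-1)^(Suc N)) (pderiv (pderiv A)) + smult ((-1)^(Suc N)) A"
    by (simp only: pderiv_add pderiv_smult add_ac)
  also have "\<dots> = f + smult ((-1)^(Suc N)) B"
    unfolding ih e by (simp add: algebra_simps)
  finally show ?case unfolding s B_def by (simp add: numeral_Bit0 add.commute)
qed


lemma exists_small_fact: "\<exists>n. c * d ^ n / fact n < (1::real)"
proof -
  have "summable (\<lambda>n. inverse (fact n) *\<^sub>R d ^ n)" by (rule summable_exp_generic)
  then have "(\<lambda>n. inverse (fact n) *\<^sub>R d ^ n) \<longlonglongrightarrow> 0" by (rule summable_LIMSEQ_zero)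
  then have "(\<lambda>n. c * (inverse (fact n) *\<^sub>R d ^ n)) \<longlonglongrightarrow> c * 0" by (intro tendsto_mult tendsto_const)
  then have "eventually (\<lambda>n. c * (inverse (fact n) *\<^sub>R d ^ n) < 1) sequentially"
    by (intro order_tendstoD) auto
  then obtain N where "\<forall>n\<ge>N. c * (inverse (fact n) *\<^sub>R d ^ n) < 1" by (auto simp: eventually_sequentially)
  then have "c * (inverse (fact N) *\<^sub>R d ^ N) < 1" by simp
  then show ?thesis by (intro exI[of _ N]) (simp add: field_simps)
qed

lemma pi_not_Rats: "pi \<notin> \<rat>"
proof
  assume pq: "pi \<in> \<rat>"
  obtain a b :: int where b: "b > 0" and ab: "pi = of_int a / of_int b"
    using Rats_cases'[OF pq] by metis
  have "of_int a / of_int b > (0::real)" using pi_gt_zero ab by simp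
  then have a: "a > 0" using b by (simp add: zero_less_divide_iff)
  obtain n where n: "pi * (pi * of_int a) ^ n / fact n < 1"
    using exists_small_fact by blast
  define p :: "real poly" where "p = monom 1 n * [:of_int a, (- of_int b):] ^ n"
  define f where "f = smult (1 / fact n) p"
  define q :: "real poly" where "q = [:pi, -1:]"
  have polyp: "poly p x = x ^ n * (of_int a - of_int b * x) ^ n" for x
    unfolding p_def by (simp add: poly_monom algebra_simps)
  have degp: "degree p \<le> 2 * n"
  proof -
    have "degree p \<le> degree (monom (1::real) n) + degree ([:of_int a, (- of_int b)::real:] ^ n)"
      unfolding p_def by (rule degree_mult_le)
    also have "\<dots> \<le> n + degree [:of_int a, (- of_int b)::real:] * n"
      by (intro add_mono degree_power_le degree_monom_le)
    also have "\<dots> \<le> 2 * n" by simp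
    finally show ?thesis .
  qed
  have degf: "degree f \<le> 2 * n" unfolding f_def using degp by simp
  have intq: "intpoly ([:of_int a, (- of_int b):] ^ n)" by (intro intpoly_power intpoly_lin)
  have val0: "poly ((pderiv ^^ k) f) 0 \<in> \<int>" for k
  proof -
    have "poly ((pderiv ^^ k) f) 0 = fact k * coeff f k"
      by (simp add: poly_0_coeff_0 coeff_higher_pderiv pochhammer_fact)
    also have "\<dots> = fact k / fact n * coeff p k" unfolding f_def by simp
    also have "\<dots> \<in> \<int>"
    proof (cases "k < n")
      case True then show ?thesis unfolding p_def by (simp add: coeff_monom_mult)
    next
      case False
      have "(fact n :: nat) dvd fact k" by (rule fact_dvd) (use False in simp)
      then obtain m :: nat where "fact k = fact n * m" by (elim dvdE)
      then have m: "(fact k :: real) = fact n * real m" by (metis of_nat_fact of_nat_mult)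
      have "coeff p k \<in> \<int>" unfolding p_def coeff_monom_mult using False intq
        by (simp add: intpoly_def)
      then show ?thesis using m by simp
    qed
    finally show ?thesis .
  qed
  have fq: "pcompose f q = f"
  proof -
    have "poly (pcompose p q) x = poly p x" for x
    proof -
      have "poly (pcompose p q) x = (pi - x) ^ n * (of_int a - of_int b * (pi - x)) ^ n"
        by (simp add: poly_pcompose q_def polyp)
      also have "(of_int a - of_int b * (pi - x)) = of_int b * x"
        using ab b by (simp add: field_simps)
      also have "of_int a - of_int b * x = of_int b * (pi - x)"
        using ab b by (simp add: field_simps)
      ultimately show ?thesis by (simp add: polyp power_mult_distrib mult_ac)
    qed
    then have "pcompose p q = p" by (intro poly_eq_poly_eq_iff[THEN iffD1] ext)
    then show ?thesis unfolding f_def by (simp add: pcompose_smult)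
  qed
  have valpi: "poly ((pderiv ^^ k) f) pi \<in> \<int>" for k
  proof -
    have "poly ((pderiv ^^ k) f) pi = poly ((pderiv ^^ k) (pcompose f q)) pi" by (simp add: fq)
    also have "\<dots> = (-1) ^ k * poly ((pderiv ^^ k) f) 0"
      unfolding q_def higher_pderiv_pcompose_refl by (simp add: poly_pcompose)
    also have "\<dots> \<in> \<int>" using val0 by (intro Ints_mult) auto
    finally show ?thesis .
  qed
  define F where "F = (\<Sum>j<Suc n. smult ((-1)^j) ((pderiv ^^ (2*j)) f))"
  have FF: "pderiv (pderiv F) + F = f"
  proof -
    have z: "(pderiv ^^ (2*n+2)) f = 0" by (rule higher_pderiv_zero) (use degf in simp)
    show ?thesis unfolding F_def F_identity z by simp
  qed
  have polyF: "poly F x = (\<Sum>j<Suc n. (-1)^j * poly ((pderiv ^^ (2*j)) f) x)" for x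
    unfolding F_def by (simp add: poly_sum)
  have F0: "poly F 0 \<in> \<int>" unfolding polyF using val0 by (intro Ints_sum Ints_mult) auto
  have Fpi: "poly F pi \<in> \<int>" unfolding polyF using valpi by (intro Ints_sum Ints_mult) auto
  define G where "G = (\<lambda>x. poly (pderiv F) x * sin x - poly F x * cos x)"
  have dG: "DERIV G x :> poly f x * sin x" for x
  proof -
    have "DERIV G x :> (poly (pderiv (pderiv F)) x * sin x + cos x * poly (pderiv F) x)
                      - (poly (pderiv F) x * cos x + (- sin x) * poly F x)"
      unfolding G_def by (intro DERIV_diff DERIV_mult poly_DERIV DERIV_sin DERIV_cos)
    moreover have "poly f x = poly (pderiv (pderiv F)) x + poly F x"
      using FF by (metis poly_add)
    ultimately show ?thesis by (simp add: algebra_simps)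
  qed
  from MVT2[OF pi_gt_zero dG] obtain z where z: "0 < z" "z < pi"
    and Gz: "G pi - G 0 = (pi - 0) * (poly f z * sin z)" by blast
  have GI: "G pi - G 0 = poly F pi + poly F 0" unfolding G_def by simp
  have pos1: "of_int a - of_int b * z > 0"
  proof -
    have "of_int b * z < of_int b * pi" using z b by simp
    also have "of_int b * pi = of_int a" using ab b by (simp add: field_simps)
    finally show ?thesis by simp
  qed
  have fz: "poly f z = z ^ n * (of_int a - of_int b * z) ^ n / fact n"
    unfolding f_def by (simp add: polyp)
  have sz: "0 < sin z" "sin z \<le> 1" using z by (auto intro: sin_gt_zero)
  have fpos: "poly f z > 0" unfolding fz using z pos1 by simp
  have "z ^ n * (of_int a - of_int b * z) ^ n \<le> pi ^ n * (of_int a) ^ n"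
    using z pos1 b by (intro mult_mono power_mono) auto
  then have fle: "poly f z \<le> (pi * of_int a) ^ n / fact n"
    unfolding fz by (simp add: divide_right_mono power_mult_distrib)
  have "poly f z * sin z \<le> poly f z * 1"
    using fpos sz by (intro mult_left_mono) auto
  then have "poly f z * sin z \<le> (pi * of_int a) ^ n / fact n" using fle by simp
  then have "pi * (poly f z * sin z) \<le> pi * ((pi * of_int a) ^ n / fact n)"
    using pi_gt_zero by (intro mult_left_mono) auto
  moreover have n': "pi * ((pi * of_int a) ^ n / fact n) < 1" using n by (simp only: times_divide_eq_right)
  ultimately have "G pi - G 0 < 1" using Gz by (simp only: diff_zero)
  moreover have "G pi - G 0 > 0" using Gz fpos sz z by simp
  moreover have "G pi - G 0 \<in> \<int>" using GI F0 Fpi by simp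
  ultimately obtain k :: int where "of_int k < (1::real)" "of_int k > (0::real)"
    by (auto elim!: Ints_cases)
  then show False by simp
qed

definition dt :: "complex \<Rightarrow> complex \<Rightarrow> real" where
  "dt a b = Im (cnj a * b)"

lemma dt_self [simp]: "dt a a = 0" by (simp add: dt_def algebra_simps)
lemma dt_swap: "dt b a = - dt a b" by (simp add: dt_def algebra_simps)
lemma dt_neg1 [simp]: "dt (-a) b = - dt a b" by (simp add: dt_def)
lemma dt_neg2 [simp]: "dt a (-b) = - dt a b" by (simp add: dt_def)
lemma dt_pluecker: "dt u a * dt b c + dt u c * dt a b = dt u b * dt a c"
  by (simp add: dt_def algebra_simps)

definition sg :: "complex set \<Rightarrow> complex \<Rightarrow> complex" where
  "sg P x = (if x \<in> P then x else - x)"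

definition Rel :: "complex set \<Rightarrow> complex set \<Rightarrow> (complex \<times> complex) set" where
  "Rel X P = {(a, b). a \<in> X \<and> b \<in> X \<and> dt (sg P a) (sg P b) > 0}"

lemma dt_sg: "dt (sg P a) (sg P b) = (if (a \<in> P) = (b \<in> P) then dt a b else - dt a b)"
  by (simp add: sg_def)

lemma p_arc_Rel:
  assumes "a \<in> X" "b \<in> X"
  shows "p_arc (Rel X P, P) a b \<longleftrightarrow> dt a b > 0"
  using assms unfolding p_arc_def Rel_def by (auto simp: dt_sg dt_swap[of a b])

locale setting =
  fixes X :: "complex set" and E :: "complex \<Rightarrow> complex \<Rightarrow> bool"
  assumes finX: "finite X" and neX: "X \<noteq> {}"
    and hE: "\<And>a b. a \<in> X \<Longrightarrow> b \<in> X \<Longrightarrow> E a b \<longleftrightarrow> dt a b > 0"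
    and hd: "\<And>a b. a \<in> X \<Longrightarrow> b \<in> X \<Longrightarrow> a \<noteq> b \<Longrightarrow> dt a b \<noteq> 0"
begin

lemma Rel_irrefl: "irrefl (Rel X P)"
  unfolding irrefl_def Rel_def by simp

lemma Rel_total: "total_on X (Rel X P)"
  unfolding total_on_def
proof (intro ballI impI)
  fix a b assume ab: "a \<in> X" "b \<in> X" "a \<noteq> b"
  have "dt (sg P a) (sg P b) \<noteq> 0" using hd[OF ab] by (simp add: dt_sg)
  moreover have "dt (sg P b) (sg P a) = - dt (sg P a) (sg P b)" by (rule dt_swap)
  ultimately show "(a, b) \<in> Rel X P \<or> (b, a) \<in> Rel X P"
    using ab unfolding Rel_def by auto
qed

lemma Rel_sub: "Rel X P \<subseteq> X \<times> X"
  unfolding Rel_def by auto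

definition Good where "Good = {P. P \<subseteq> X \<and> trans (Rel X P)}"

lemma ext_char:
  "extensions X E = (\<lambda>P. (Rel X P, P)) ` Good"
proof (intro set_eqI iffI)
  fix S assume S: "S \<in> extensions X E"
  obtain L P where SLP: "S = (L, P)" by (cases S)
  have st: "L \<subseteq> X \<times> X" "strict_linear_order_on X L" "P \<subseteq> X"
    and pa: "\<And>a b. a \<in> X \<Longrightarrow> b \<in> X \<Longrightarrow> p_arc (L, P) a b \<longleftrightarrow> dt a b > 0"
    using S hE unfolding extensions_def P2_struct_def SLP by auto
  have "L = Rel X P"
  proof (intro set_eqI iffI)
    fix z assume z: "z \<in> L"
    obtain a b where zab: "z = (a, b)" by (cases z)
    have ab: "a \<in> X" "b \<in> X" using z zab st(1) by auto
    show "z \<in> Rel X P"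
      using pa[OF ab] pa[OF ab(2) ab(1)] p_arc_Rel[OF ab, of P] p_arc_Rel[OF ab(2) ab(1), of P]
        z ab unfolding zab p_arc_def by (auto split: if_splits)
  next
    fix z assume z: "z \<in> Rel X P"
    obtain a b where zab: "z = (a, b)" by (cases z)
    have ab: "a \<in> X" "b \<in> X" using z zab Rel_sub by auto
    show "z \<in> L"
      using pa[OF ab] pa[OF ab(2) ab(1)] p_arc_Rel[OF ab, of P] p_arc_Rel[OF ab(2) ab(1), of P]
        z ab unfolding zab p_arc_def by (auto split: if_splits)
  qed
  then have "P \<in> Good" using st unfolding Good_def strict_linear_order_on_def by auto
  then show "S \<in> (\<lambda>P. (Rel X P, P)) ` Good" using SLP \<open>L = Rel X P\<close> by auto
next
  fix S assume "S \<in> (\<lambda>P. (Rel X P, P)) ` Good"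
  then obtain P where P: "P \<in> Good" and S: "S = (Rel X P, P)" by auto
  show "S \<in> extensions X E"
    unfolding S extensions_def P2_struct_def strict_linear_order_on_def
    using P Rel_sub Rel_irrefl Rel_total p_arc_Rel hE by (auto simp: Good_def)
qed

definition build :: "complex \<times> bool \<Rightarrow> complex set" where
  "build me = {x \<in> X. if x = fst me then snd me else dt (if snd me then fst me else - fst me) x > 0}"

lemma build_props:
  fixes e :: bool
  assumes m: "m \<in> X"
  defines "u \<equiv> (if e then m else - m)"
  shows "sg (build (m, e)) m = u"
    and "\<And>x. x \<in> X \<Longrightarrow> x \<noteq> m \<Longrightarrow> dt u (sg (build (m, e)) x) > 0"
proof -
  show "sg (build (m, e)) m = u" using m unfolding sg_def build_def u_def by auto
next
  fix x assume x: "x \<in> X" "x \<noteq> m"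
  have "dt m x \<noteq> 0" using hd[OF m x(1)] x by auto
  then have "dt u x \<noteq> 0" unfolding u_def by auto
  then show "dt u (sg (build (m, e)) x) > 0"
    using x unfolding sg_def build_def u_def by auto
qed

lemma build_good:
  assumes m: "m \<in> X"
  shows "build (m, e) \<in> Good" and "\<And>x. x \<in> X \<Longrightarrow> x \<noteq> m \<Longrightarrow> (m, x) \<in> Rel X (build (m, e))"
proof -
  define P where "P = build (m, e)"
  define u where "u = (if e then m else - m)"
  have su: "sg P m = u" and pos: "\<And>x. x \<in> X \<Longrightarrow> x \<noteq> m \<Longrightarrow> dt u (sg P x) > 0"
    using build_props[OF m, where e=e] unfolding P_def u_def by auto
  show "\<And>x. x \<in> X \<Longrightarrow> x \<noteq> m \<Longrightarrow> (m, x) \<in> Rel X (build (m, e))"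
    using pos su m unfolding P_def Rel_def by auto
  have "trans (Rel X P)"
  proof (rule transI)
    fix a b c assume ab: "(a, b) \<in> Rel X P" and bc: "(b, c) \<in> Rel X P"
    have X: "a \<in> X" "b \<in> X" "c \<in> X" and d1: "dt (sg P a) (sg P b) > 0" and d2: "dt (sg P b) (sg P c) > 0"
      using ab bc unfolding Rel_def by auto
    show "(a, c) \<in> Rel X P"
    proof (cases "b = m")
      case True
      then have "a \<noteq> m" using d1 by auto
      then have "dt u (sg P a) > 0" using pos X by auto
      then show ?thesis using d1 True su by (simp add: dt_swap[of u])
    next
      case bm: False
      have ub: "dt u (sg P b) > 0" using pos X bm by auto
      show ?thesis
      proof (cases "c = m")
        case True
        then show ?thesis using d2 ub su by (simp add: dt_swap[of u])
      next
        case cm: False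
        have uc: "dt u (sg P c) > 0" using pos X cm by auto
        show ?thesis
        proof (cases "a = m")
          case True
          then show ?thesis using uc su X unfolding Rel_def by auto
        next
          case False
          have ua: "dt u (sg P a) > 0" using pos X False by auto
          have "dt u (sg P b) * dt (sg P a) (sg P c) > 0"
            using dt_pluecker[of u "sg P a" "sg P b" "sg P c"] ua uc d1 d2
            by (smt (verit) mult_pos_pos)
          then have "dt (sg P a) (sg P c) > 0" using ub by (simp add: zero_less_mult_iff)
          then show ?thesis using X unfolding Rel_def by auto
        qed
      qed
    qed
  qed
  then show "build (m, e) \<in> Good" unfolding Good_def P_def build_def by auto
qed

lemma good_min:
  assumes P: "P \<in> Good"
  shows "\<exists>m\<in>X. \<forall>x\<in>X. x \<noteq> m \<longrightarrow> (m, x) \<in> Rel X P"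
proof -
  have tr: "trans (Rel X P)" using P by (simp add: Good_def)
  have "finite (Rel X P)" using Rel_sub finX by (meson finite_SigmaI finite_subset)
  moreover have "acyclic (Rel X P)"
    unfolding acyclic_def using tr Rel_irrefl by (simp add: trancl_id irrefl_def)
  ultimately have wf: "wf (Rel X P)" by (rule finite_acyclic_wf)
  obtain x0 where "x0 \<in> X" using neX by auto
  then obtain m where m: "m \<in> X" and mm: "\<And>y. (y, m) \<in> Rel X P \<Longrightarrow> y \<notin> X"
    using wfE_min[OF wf] by metis
  show ?thesis
  proof (intro bexI[OF _ m] ballI impI)
    fix x assume "x \<in> X" "x \<noteq> m"
    then show "(m, x) \<in> Rel X P" using Rel_total m mm unfolding total_on_def by blast
  qed
qed

lemma min_unique:
  assumes P: "P \<in> Good" and m: "m \<in> X" "\<forall>x\<in>X. x \<noteq> m \<longrightarrow> (m, x) \<in> Rel X P"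
    and m': "m' \<in> X" "\<forall>x\<in>X. x \<noteq> m' \<longrightarrow> (m', x) \<in> Rel X P"
  shows "m = m'"
proof (rule ccontr)
  assume ne: "m \<noteq> m'"
  have tr: "trans (Rel X P)" using P by (simp add: Good_def)
  have "(m, m') \<in> Rel X P" "(m', m) \<in> Rel X P" using m m' ne by auto
  then have "(m, m) \<in> Rel X P" using tr by (meson transD)
  then show False using Rel_irrefl by (simp add: irrefl_def)
qed

lemma good_eq_build:
  assumes P: "P \<in> Good" and m: "m \<in> X" and mm: "\<forall>x\<in>X. x \<noteq> m \<longrightarrow> (m, x) \<in> Rel X P"
  shows "P = build (m, m \<in> P)"
proof (intro set_eqI iffI)
  have PX: "P \<subseteq> X" using P by (simp add: Good_def)
  define u where "u = sg P m"
  have u: "u = (if m \<in> P then m else - m)" unfolding u_def sg_def by simp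
  {
    fix x assume x: "x \<in> X" "x \<noteq> m"
    have "dt u (sg P x) > 0" using mm x unfolding Rel_def u_def by auto
    then have "x \<in> P \<longleftrightarrow> dt u x > 0" unfolding sg_def by (auto split: if_splits)
  }
  note key = this
  fix x
  show "x \<in> P \<Longrightarrow> x \<in> build (m, m \<in> P)" using PX key[of x] u unfolding build_def by auto
  show "x \<in> build (m, m \<in> P) \<Longrightarrow> x \<in> P" using PX key[of x] u unfolding build_def
    by (auto split: if_splits)
qed

lemma bij_build: "bij_betw build (X \<times> UNIV) Good"
proof (rule bij_betw_imageI)
  show "inj_on build (X \<times> UNIV)"
  proof (rule inj_onI)
    fix p q assume p: "p \<in> X \<times> UNIV" and q: "q \<in> X \<times> UNIV" and eq: "build p = build q"
    obtain m e where pe: "p = (m, e)" by (cases p)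
    obtain m' e' where qe: "q = (m', e')" by (cases q)
    have mX: "m \<in> X" "m' \<in> X" using p q pe qe by auto
    have g: "build (m, e) \<in> Good" using build_good mX by auto
    have eq': "build (m, e) = build (m', e')" using eq pe qe by simp
    have m1: "\<forall>x\<in>X. x \<noteq> m \<longrightarrow> (m, x) \<in> Rel X (build (m, e))"
      using build_good(2)[OF mX(1)] by blast
    have m2: "\<forall>x\<in>X. x \<noteq> m' \<longrightarrow> (m', x) \<in> Rel X (build (m, e))"
      unfolding eq' using build_good(2)[OF mX(2)] by blast
    have mm: "m = m'" by (rule min_unique[OF g mX(1) m1 mX(2) m2])
    have A: "m' \<in> build (m', e) \<longleftrightarrow> e" and B: "m' \<in> build (m', e') \<longleftrightarrow> e'"
      using mX(2) unfolding build_def by auto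
    have C: "build (m', e) = build (m', e')" using eq' unfolding mm .
    have "e = e'" using A B C by metis
    then show "p = q" using mm pe qe by simp
  qed
  show "build ` (X \<times> UNIV) = Good"
  proof (intro set_eqI iffI)
    fix P assume "P \<in> build ` (X \<times> UNIV)"
    then obtain m e where "m \<in> X" "P = build (m, e)" by auto
    then show "P \<in> Good" using build_good(1) by simp
  next
    fix P assume P: "P \<in> Good"
    obtain m where m: "m \<in> X" and mm: "\<forall>x\<in>X. x \<noteq> m \<longrightarrow> (m, x) \<in> Rel X P" using good_min[OF P] by blast
    have "P = build (m, m \<in> P)" by (rule good_eq_build[OF P m mm])
    moreover have "(m, m \<in> P) \<in> X \<times> UNIV" using m by simp
    ultimately show "P \<in> build ` (X \<times> UNIV)" by (rule image_eqI)
  qed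
qed

lemma card_ext: "card (extensions X E) = 2 * card X"
proof -
  have "inj_on (\<lambda>P. (Rel X P, P)) Good" by (rule inj_onI) auto
  then have "card (extensions X E) = card Good" unfolding ext_char by (rule card_image)
  also have "\<dots> = card (X \<times> (UNIV :: bool set))" using bij_build by (metis bij_betw_same_card)
  also have "\<dots> = 2 * card X" by (simp add: card_cartesian_product card_UNIV_bool)
  finally show ?thesis .
qed

end

definition act :: "('a \<Rightarrow> 'a) \<Rightarrow> ('a \<times> 'a) set \<times> 'a set \<Rightarrow> ('a \<times> 'a) set \<times> 'a set" where
  "act f S = (map_prod f f ` fst S, f ` snd S)"

lemma act_K1:
  assumes f: "bij_betw f X X" and S: "fst S \<subseteq> X \<times> X" and ab: "a \<in> X" "b \<in> X"
  shows "(f a, f b) \<in> fst (act f S) \<longleftrightarrow> (a, b) \<in> fst S"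
proof
  assume "(f a, f b) \<in> fst (act f S)"
  then obtain a' b' where ab': "(a', b') \<in> fst S" "f a' = f a" "f b' = f b" unfolding act_def by auto
  have "a' \<in> X" "b' \<in> X" using ab' S by auto
  then have "a' = a" "b' = b" using ab ab' f unfolding bij_betw_def inj_on_def by auto
  then show "(a, b) \<in> fst S" using ab' by simp
next
  assume "(a, b) \<in> fst S"
  then show "(f a, f b) \<in> fst (act f S)" unfolding act_def by force
qed

lemma act_K2:
  assumes f: "bij_betw f X X" and S: "snd S \<subseteq> X" and a: "a \<in> X"
  shows "f a \<in> snd (act f S) \<longleftrightarrow> a \<in> snd S"
proof
  assume "f a \<in> snd (act f S)"
  then obtain a' where a': "a' \<in> snd S" "f a' = f a" unfolding act_def by auto
  have "a' \<in> X" using a' S by auto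
  then have "a' = a" using a a' f unfolding bij_betw_def inj_on_def by auto
  then show "a \<in> snd S" using a' by simp
next
  assume "a \<in> snd S"
  then show "f a \<in> snd (act f S)" unfolding act_def by force
qed

lemma act_K3:
  assumes f: "bij_betw f X X" and S: "fst S \<subseteq> X \<times> X" "snd S \<subseteq> X"
  shows "fst (act f S) \<subseteq> X \<times> X" "snd (act f S) \<subseteq> X"
  using f S unfolding act_def bij_betw_def by auto

lemma surjX: "bij_betw f X X \<Longrightarrow> c \<in> X \<Longrightarrow> \<exists>a\<in>X. c = f a"
  unfolding bij_betw_def by auto

lemma act_ext:
  assumes S: "S \<in> extensions X E" and f: "f \<in> tour_aut X E"
  shows "act f S \<in> extensions X E" and "P2_iso X S X (act f S)"
proof -
  have fb: "bij_betw f X X" and fE: "\<And>a b. a \<in> X \<Longrightarrow> b \<in> X \<Longrightarrow> E a b \<longleftrightarrow> E (f a) (f b)"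
    using f unfolding tour_aut_def by auto
  have fX: "\<And>a. a \<in> X \<Longrightarrow> f a \<in> X" using fb unfolding bij_betw_def by auto
  have Ss: "fst S \<subseteq> X \<times> X" "snd S \<subseteq> X" and lin: "strict_linear_order_on X (fst S)"
    and pa: "\<And>a b. a \<in> X \<Longrightarrow> b \<in> X \<Longrightarrow> p_arc S a b \<longleftrightarrow> E a b"
    using S unfolding extensions_def P2_struct_def by auto
  define T where "T = act f S"
  have K1: "\<And>a b. a \<in> X \<Longrightarrow> b \<in> X \<Longrightarrow> (f a, f b) \<in> fst T \<longleftrightarrow> (a, b) \<in> fst S"
    unfolding T_def using act_K1[OF fb Ss(1)] by blast
  have K2: "\<And>a. a \<in> X \<Longrightarrow> f a \<in> snd T \<longleftrightarrow> a \<in> snd S"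
    unfolding T_def using act_K2[OF fb Ss(2)] by blast
  have K3: "fst T \<subseteq> X \<times> X" "snd T \<subseteq> X" unfolding T_def using act_K3[OF fb Ss] by auto
  have sv: "\<And>c. c \<in> X \<Longrightarrow> \<exists>a\<in>X. c = f a" using surjX[OF fb] by blast
  have trS: "trans (fst S)" and irS: "irrefl (fst S)" and toS: "total_on X (fst S)"
    using lin unfolding strict_linear_order_on_def by auto
  have trT: "trans (fst T)"
  proof (rule transI)
    fix x y z assume xy: "(x, y) \<in> fst T" and yz: "(y, z) \<in> fst T"
    have X: "x \<in> X" "y \<in> X" "z \<in> X" using xy yz K3 by auto
    obtain a b c where abc: "a \<in> X" "b \<in> X" "c \<in> X" "x = f a" "y = f b" "z = f c"
      using sv X by metis
    have "(a, b) \<in> fst S" "(b, c) \<in> fst S" using K1 abc xy yz by auto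
    then have "(a, c) \<in> fst S" using trS by (meson transD)
    then show "(x, z) \<in> fst T" using K1 abc by auto
  qed
  have irT: "irrefl (fst T)"
  proof (unfold irrefl_def, intro allI notI)
    fix x assume xx: "(x, x) \<in> fst T"
    then have "x \<in> X" using K3 by auto
    then obtain a where "a \<in> X" "x = f a" using sv by blast
    then show False using K1 xx irS by (auto simp: irrefl_def)
  qed
  have toT: "total_on X (fst T)"
  proof (unfold total_on_def, intro ballI impI)
    fix x y assume "x \<in> X" "y \<in> X" "x \<noteq> y"
    then obtain a b where ab: "a \<in> X" "b \<in> X" "x = f a" "y = f b" "a \<noteq> b" using sv by metis
    then have "(a, b) \<in> fst S \<or> (b, a) \<in> fst S" using toS unfolding total_on_def by blast
    then show "(x, y) \<in> fst T \<or> (y, x) \<in> fst T" using K1 ab by auto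
  qed
  have paT: "p_arc T (f a) (f b) \<longleftrightarrow> p_arc S a b" if "a \<in> X" "b \<in> X" for a b
    using K1 K2 that unfolding p_arc_def by auto
  show "act f S \<in> extensions X E"
    unfolding T_def[symmetric] extensions_def P2_struct_def strict_linear_order_on_def
  proof (intro CollectI conjI ballI K3 trT irT toT)
    fix x y assume "x \<in> X" "y \<in> X"
    then obtain a b where ab: "a \<in> X" "b \<in> X" "x = f a" "y = f b" using sv by metis
    show "p_arc T x y \<longleftrightarrow> E x y" using paT[OF ab(1,2)] pa[OF ab(1,2)] fE[OF ab(1,2)] ab by simp
  qed
  show "P2_iso X S X (act f S)"
    unfolding P2_iso_def T_def[symmetric] using fb K1 K2 by blast
qed

lemma iso_act:
  assumes S: "S \<in> extensions X E" and T: "T \<in> extensions X E" and iso: "P2_iso X S X T"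
  shows "\<exists>g\<in>tour_aut X E. T = act g S"
proof -
  obtain f where fb: "bij_betw f X X" and K1: "\<And>a b. a \<in> X \<Longrightarrow> b \<in> X \<Longrightarrow> (a, b) \<in> fst S \<longleftrightarrow> (f a, f b) \<in> fst T"
    and K2: "\<And>a. a \<in> X \<Longrightarrow> a \<in> snd S \<longleftrightarrow> f a \<in> snd T"
    using iso unfolding P2_iso_def by blast
  have Ss: "fst S \<subseteq> X \<times> X" "snd S \<subseteq> X" and pa: "\<And>a b. a \<in> X \<Longrightarrow> b \<in> X \<Longrightarrow> p_arc S a b \<longleftrightarrow> E a b"
    using S unfolding extensions_def P2_struct_def by auto
  have Ts: "fst T \<subseteq> X \<times> X" "snd T \<subseteq> X" and pb: "\<And>a b. a \<in> X \<Longrightarrow> b \<in> X \<Longrightarrow> p_arc T a b \<longleftrightarrow> E a b"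
    using T unfolding extensions_def P2_struct_def by auto
  have sv: "\<And>c. c \<in> X \<Longrightarrow> \<exists>a\<in>X. c = f a" using surjX[OF fb] by blast
  have fX: "\<And>a. a \<in> X \<Longrightarrow> f a \<in> X" using fb unfolding bij_betw_def by auto
  define g where "g = restrict f X"
  have gf: "\<And>a. a \<in> X \<Longrightarrow> g a = f a" unfolding g_def by simp
  have gb: "bij_betw g X X" using fb gf by (metis bij_betw_cong)
  have gE: "E a b \<longleftrightarrow> E (g a) (g b)" if "a \<in> X" "b \<in> X" for a b
  proof -
    have "p_arc S a b \<longleftrightarrow> p_arc T (f a) (f b)" using K1 K2 that unfolding p_arc_def by auto
    then show ?thesis using pa pb that fX gf by auto
  qed
  have gG: "g \<in> tour_aut X E" unfolding tour_aut_def using gb gE fX gf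
    by (auto simp: g_def)
  have "fst T = map_prod g g ` fst S"
  proof (intro set_eqI iffI)
    fix z assume z: "z \<in> fst T"
    then obtain c d where cd: "z = (c, d)" "c \<in> X" "d \<in> X" using Ts by auto
    then obtain a b where ab: "a \<in> X" "b \<in> X" "c = f a" "d = f b" using sv by metis
    then have abS: "(a, b) \<in> fst S" using K1 z cd by auto
    have "z = map_prod g g (a, b)" using ab cd gf by simp
    then show "z \<in> map_prod g g ` fst S" using abS by blast
  next
    fix z assume "z \<in> map_prod g g ` fst S"
    then obtain a b where ab: "(a, b) \<in> fst S" "z = (g a, g b)" by auto
    then have "a \<in> X" "b \<in> X" using Ss by auto
    then show "z \<in> fst T" using K1 ab gf by auto
  qed
  moreover have "snd T = g ` snd S"
  proof (intro set_eqI iffI)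
    fix c assume c: "c \<in> snd T"
    then have "c \<in> X" using Ts by auto
    then obtain a where a: "a \<in> X" "c = f a" using sv by metis
    then have "a \<in> snd S" using K2 c by auto
    then show "c \<in> g ` snd S" using a gf by force
  next
    fix c assume "c \<in> g ` snd S"
    then obtain a where a: "a \<in> snd S" "c = g a" by auto
    then have "a \<in> X" using Ss by auto
    then show "c \<in> snd T" using K2 a gf by auto
  qed
  ultimately have "T = act g S" unfolding act_def by (simp add: prod_eq_iff)
  then show ?thesis using gG by blast
qed

definition pr :: "('a \<times> 'a) set \<Rightarrow> 'a set \<Rightarrow> 'a \<Rightarrow> 'a set" where
  "pr R X x = {y \<in> X. (y, x) \<in> R}"

lemma pr_card_inj:
  assumes fin: "finite X" and lin: "strict_linear_order_on X R" and c: "c \<in> X" and d: "d \<in> X"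
    and eq: "card (pr R X c) = card (pr R X d)"
  shows "c = d"
proof (rule ccontr)
  assume ne: "c \<noteq> d"
  have tr: "trans R" and ir: "irrefl R" and to: "total_on X R"
    using lin unfolding strict_linear_order_on_def by auto
  have lt: "card (pr R X x) < card (pr R X y)" if "(x, y) \<in> R" "x \<in> X" "y \<in> X" for x y
  proof -
    have "pr R X x \<subset> pr R X y"
    proof
      show "pr R X x \<subseteq> pr R X y" using that tr unfolding pr_def by (auto dest: transD)
      have "x \<in> pr R X y" "x \<notin> pr R X x" using that ir unfolding pr_def irrefl_def by auto
      then show "pr R X x \<noteq> pr R X y" by blast
    qed
    moreover have "finite (pr R X y)" using fin unfolding pr_def by simp
    ultimately show ?thesis by (rule psubset_card_mono[rotated])
  qed
  from to ne c d have "(c, d) \<in> R \<or> (d, c) \<in> R" unfolding total_on_def by blast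
  then show False using lt c d eq by fastforce
qed

lemma act_inj:
  assumes fin: "finite X" and S: "S \<in> extensions X E"
  shows "inj_on (\<lambda>f. act f S) (tour_aut X E)"
  unfolding inj_on_def
proof (intro ballI impI)
  fix f g assume f: "f \<in> tour_aut X E" and g: "g \<in> tour_aut X E" and eq: "act f S = act g S"
  define T where "T = act f S"
  have Text: "T \<in> extensions X E" unfolding T_def using act_ext[OF S f] by simp
  then have linT: "strict_linear_order_on X (fst T)" unfolding extensions_def P2_struct_def by auto
  have Ss: "fst S \<subseteq> X \<times> X" "snd S \<subseteq> X"
    using S unfolding extensions_def P2_struct_def by auto
  have key: "card (pr (fst T) X (h a)) = card (pr (fst S) X a)"
    if h: "h \<in> tour_aut X E" and hT: "act h S = T" and a: "a \<in> X" for h a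
  proof -
    have hb: "bij_betw h X X" using h unfolding tour_aut_def by auto
    have sv: "\<And>c. c \<in> X \<Longrightarrow> \<exists>b\<in>X. c = h b" using surjX[OF hb] by blast
    have K1: "\<And>x y. x \<in> X \<Longrightarrow> y \<in> X \<Longrightarrow> (h x, h y) \<in> fst T \<longleftrightarrow> (x, y) \<in> fst S"
      using act_K1[OF hb Ss(1)] hT by blast
    have hX: "\<And>x. x \<in> X \<Longrightarrow> h x \<in> X" using hb unfolding bij_betw_def by auto
    have "pr (fst T) X (h a) = h ` pr (fst S) X a"
    proof (intro set_eqI iffI)
      fix y assume y: "y \<in> pr (fst T) X (h a)"
      then have "y \<in> X" unfolding pr_def by auto
      then obtain b where b: "b \<in> X" "y = h b" using sv by blast
      then show "y \<in> h ` pr (fst S) X a" using y K1 a unfolding pr_def by auto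
    next
      fix y assume "y \<in> h ` pr (fst S) X a"
      then show "y \<in> pr (fst T) X (h a)" using K1 a hX unfolding pr_def by auto
    qed
    moreover have "inj_on h (pr (fst S) X a)"
      using hb unfolding bij_betw_def pr_def by (auto intro: inj_on_subset)
    ultimately show ?thesis by (simp add: card_image)
  qed
  have fX: "\<And>a. a \<in> X \<Longrightarrow> f a \<in> X" and gX: "\<And>a. a \<in> X \<Longrightarrow> g a \<in> X"
    using f g unfolding tour_aut_def bij_betw_def by auto
  have fT: "act f S = T" and gT: "act g S = T" using eq unfolding T_def by auto
  have "f a = g a" if a: "a \<in> X" for a
    using key[OF f fT a] key[OF g gT a]
    by (intro pr_card_inj[OF fin linT fX[OF a] gX[OF a]]) simp
  moreover have "f \<in> extensional X" "g \<in> extensional X" using f g unfolding tour_aut_def by (auto simp: PiE_iff)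
  ultimately show "f = g" by (intro extensionalityI) auto
qed

definition isorel where
  "isorel X E = {(S, T). S \<in> extensions X E \<and> T \<in> extensions X E \<and> P2_iso X S X T}"

lemma isorel_equiv: "equiv (extensions X E) (isorel X E)"
proof (rule equivI)
  show "isorel X E \<subseteq> extensions X E \<times> extensions X E" unfolding isorel_def by auto
  show "refl_on (extensions X E) (isorel X E)"
  proof (rule refl_onI)
    fix S assume "S \<in> extensions X E"
    moreover have "P2_iso X S X S" unfolding P2_iso_def by (intro exI[of _ id]) auto
    ultimately show "(S, S) \<in> isorel X E" unfolding isorel_def by auto
  qed
  show "sym (isorel X E)"
  proof (rule symI)
    fix S T assume "(S, T) \<in> isorel X E"
    then have S: "S \<in> extensions X E" and T: "T \<in> extensions X E" and iso: "P2_iso X S X T"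
      unfolding isorel_def by auto
    obtain f where fb: "bij_betw f X X" and K1: "\<And>a b. a \<in> X \<Longrightarrow> b \<in> X \<Longrightarrow> (a, b) \<in> fst S \<longleftrightarrow> (f a, f b) \<in> fst T"
      and K2: "\<And>a. a \<in> X \<Longrightarrow> a \<in> snd S \<longleftrightarrow> f a \<in> snd T"
      using iso unfolding P2_iso_def by blast
    define h where "h = inv_into X f"
    have hb: "bij_betw h X X" unfolding h_def by (rule bij_betw_inv_into[OF fb])
    have fh: "\<And>a. a \<in> X \<Longrightarrow> f (h a) = a" unfolding h_def using fb
      by (meson bij_betw_inv_into_right)
    have hX: "\<And>a. a \<in> X \<Longrightarrow> h a \<in> X" using hb unfolding bij_betw_def by auto
    have "P2_iso X T X S" unfolding P2_iso_def
    proof (intro exI[of _ h] conjI ballI hb)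
      fix a b assume "a \<in> X" "b \<in> X"
      then show "(a, b) \<in> fst T \<longleftrightarrow> (h a, h b) \<in> fst S" using K1[of "h a" "h b"] hX fh by auto
    next
      fix a assume "a \<in> X"
      then show "a \<in> snd T \<longleftrightarrow> h a \<in> snd S" using K2[of "h a"] hX fh by auto
    qed
    then show "(T, S) \<in> isorel X E" using S T unfolding isorel_def by auto
  qed
  show "trans (isorel X E)"
  proof (rule transI)
    fix S T U assume "(S, T) \<in> isorel X E" "(T, U) \<in> isorel X E"
    then have S: "S \<in> extensions X E" and U: "U \<in> extensions X E" and iso1: "P2_iso X S X T"
      and iso2: "P2_iso X T X U"
      unfolding isorel_def by auto
    obtain f where fb: "bij_betw f X X" and K1: "\<And>a b. a \<in> X \<Longrightarrow> b \<in> X \<Longrightarrow> (a, b) \<in> fst S \<longleftrightarrow> (f a, f b) \<in> fst T"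
      and K2: "\<And>a. a \<in> X \<Longrightarrow> a \<in> snd S \<longleftrightarrow> f a \<in> snd T"
      using iso1 unfolding P2_iso_def by blast
    obtain g where gb: "bij_betw g X X" and L1: "\<And>a b. a \<in> X \<Longrightarrow> b \<in> X \<Longrightarrow> (a, b) \<in> fst T \<longleftrightarrow> (g a, g b) \<in> fst U"
      and L2: "\<And>a. a \<in> X \<Longrightarrow> a \<in> snd T \<longleftrightarrow> g a \<in> snd U"
      using iso2 unfolding P2_iso_def by blast
    have fX: "\<And>a. a \<in> X \<Longrightarrow> f a \<in> X" using fb unfolding bij_betw_def by auto
    have "P2_iso X S X U" unfolding P2_iso_def
    proof (intro exI[of _ "g \<circ> f"] conjI ballI)
      show "bij_betw (g \<circ> f) X X" using fb gb by (rule bij_betw_trans)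
    next
      fix a b assume "a \<in> X" "b \<in> X"
      then show "(a, b) \<in> fst S \<longleftrightarrow> ((g \<circ> f) a, (g \<circ> f) b) \<in> fst U" using K1 L1 fX by auto
    next
      fix a assume "a \<in> X"
      then show "a \<in> snd S \<longleftrightarrow> (g \<circ> f) a \<in> snd U" using K2 L2 fX by auto
    qed
    then show "(S, U) \<in> isorel X E" using S U unfolding isorel_def by auto
  qed
qed

lemma class_eq:
  assumes S: "S \<in> extensions X E"
  shows "isorel X E `` {S} = (\<lambda>f. act f S) ` tour_aut X E"
proof (intro set_eqI iffI)
  fix T assume "T \<in> isorel X E `` {S}"
  then have "T \<in> extensions X E" "P2_iso X S X T" unfolding isorel_def by auto
  then show "T \<in> (\<lambda>f. act f S) ` tour_aut X E" using iso_act[OF S] by blast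
next
  fix T assume "T \<in> (\<lambda>f. act f S) ` tour_aut X E"
  then obtain f where f: "f \<in> tour_aut X E" "T = act f S" by auto
  then show "T \<in> isorel X E `` {S}" using act_ext[OF S f(1)] S unfolding isorel_def by auto
qed

lemma orbit_count:
  assumes fin: "finite X"
  shows "card (tour_aut X E) * card (extensions X E // isorel X E) = card (extensions X E)"
proof -
  have finE: "finite (extensions X E)"
  proof (rule finite_subset)
    show "extensions X E \<subseteq> Pow (X \<times> X) \<times> Pow X" unfolding extensions_def P2_struct_def by auto
    show "finite (Pow (X \<times> X) \<times> Pow X)" using fin by simp
  qed
  have eq: "equiv (extensions X E) (isorel X E)" by (rule isorel_equiv)
  have F1: "finite (extensions X E // isorel X E)" using finE eq by (metis equiv_type finite_quotient)
  have F2: "finite (\<Union> (extensions X E // isorel X E))" using finE Union_quotient[OF eq] by simp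
  have F3: "\<forall>c\<in>extensions X E // isorel X E. card c = card (tour_aut X E)"
    proof
      fix c assume "c \<in> extensions X E // isorel X E"
      then obtain S where S: "S \<in> extensions X E" "c = isorel X E `` {S}" by (auto elim: quotientE)
      then show "card c = card (tour_aut X E)"
        using class_eq[OF S(1)] act_inj[OF fin S(1)] by (simp add: card_image)
    qed
  have F4: "\<forall>c1\<in>extensions X E // isorel X E. \<forall>c2\<in>extensions X E // isorel X E. c1 \<noteq> c2 \<longrightarrow> c1 \<inter> c2 = {}"
      using quotient_disj[OF eq] by blast
  have "card (tour_aut X E) * card (extensions X E // isorel X E) = card (\<Union> (extensions X E // isorel X E))"
    using F1 F2 F3 F4 by (intro card_partition) auto
  also have "\<dots> = card (extensions X E)" using Union_quotient[OF eq] by simp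
  finally show ?thesis .
qed


lemma S2_vertex_cis: "x \<in> S2_vertices \<Longrightarrow> \<exists>q::rat. x = cis (of_rat q)"
  unfolding S2_vertices_def by auto

lemma S2_arc_dt: "S2_arc (cis s) b \<longleftrightarrow> dt (cis s) b > 0"
proof -
  have "b / cis s = cnj (cis s) * b" by (simp add: divide_inverse cis_cnj mult.commute)
  then show ?thesis unfolding S2_arc_def dt_def using Arg_lt_pi by simp
qed

lemma dt_cis: "dt (cis s) (cis t) = sin (t - s)"
  by (simp add: dt_def cis_cnj cis_mult)

lemma S2_dt_nonzero:
  assumes a: "a \<in> S2_vertices" and b: "b \<in> S2_vertices" and ne: "a \<noteq> b"
  shows "dt a b \<noteq> 0"
proof
  assume z: "dt a b = 0"
  obtain q1 q2 :: rat where q: "a = cis (of_rat q1)" "b = cis (of_rat q2)"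
    using S2_vertex_cis a b by metis
  have "sin (of_rat q2 - of_rat q1 :: real) = 0" using z q dt_cis by simp
  then obtain i :: int where i: "(of_rat q2 - of_rat q1 :: real) = of_int i * pi" by (auto simp: sin_zero_iff_int2)
  show False
  proof (cases "i = 0")
    case True
    then have "q1 = q2" using i by simp
    then show False using ne q by simp
  next
    case False
    then have "pi = (of_rat q2 - of_rat q1 :: real) / of_int i" using i by (simp add: field_simps)
    also have "\<dots> \<in> \<rat>" by (intro Rats_divide Rats_diff) auto
    finally show False using pi_not_Rats by simp
  qed
qed

theorem lemma2:
  fixes X :: "complex set"
  assumes "finite X" and "X \<noteq> {}" and "X \<subseteq> S2_vertices"
  shows "real (card (extensions X S2_arc //
                     {(S, T). S \<in> extensions X S2_arc \<and> T \<in> extensions X S2_arc \<and> P2_iso X S X T}))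
         = 2 * real (card X) / real (card (tour_aut X S2_arc))"
proof -
  have st: "setting X S2_arc"
  proof
    show "finite X" "X \<noteq> {}" by fact+
    fix a b assume ab: "a \<in> X" "b \<in> X"
    obtain q where "a = cis (of_rat q)" using S2_vertex_cis ab assms(3) by blast
    then show "S2_arc a b \<longleftrightarrow> dt a b > 0" using S2_arc_dt by simp
    assume "a \<noteq> b"
    then show "dt a b \<noteq> 0" using S2_dt_nonzero ab assms(3) by blast
  qed
  have c1: "card (extensions X S2_arc) = 2 * card X" by (rule setting.card_ext[OF st])
  have c2: "card (tour_aut X S2_arc) * card (extensions X S2_arc // isorel X S2_arc) = card (extensions X S2_arc)"
    by (rule orbit_count[OF assms(1)])
  have "card X > 0" using assms(1,2) by (simp add: card_gt_0_iff)
  then have "card (tour_aut X S2_arc) * card (extensions X S2_arc // isorel X S2_arc) \<noteq> 0"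
    using c1 c2 by simp
  then have "card (tour_aut X S2_arc) \<noteq> 0" by simp
  moreover have "real (card (tour_aut X S2_arc)) * real (card (extensions X S2_arc // isorel X S2_arc)) = 2 * real (card X)"
    using c1 c2 by (metis of_nat_mult of_nat_numeral)
  ultimately show ?thesis unfolding isorel_def[symmetric] by (simp add: field_simps)
qed

end
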